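(* Persistence equivalence and graph equivalence of discrete Morse functions on graphs are independent: there exist a finite tree $T$ with $n$ simplices and discrete Morse functions on $T$ that are graph equivalent but not persistence equivalent, and discrete Morse functions on $T$ that are persistence equivalent but not graph equivalent.
   Context: For a finite simple graph $G$, its simplices are its vertices and edges; write $v<e$ if vertex $v$ is an endpoint of edge $e$; $n$ is the total number of simplices. A discrete Morse function is a function $f$ from the simplices to $[0,n]$ such that: (i) $v<e$ implies $f(v)\le f(e)$; (ii) $\min f=0$; (iii) every value is attained by at most two simplices, and if $f(\sigma)=f(\tau)$ with $\sigma\neq\tau$ then one is an endpoint of the other; (iv) if a value $f(\sigma)$ is attained only by $\sigma$, then $f(\sigma)\in\mathbb{N}$; such $\sigma$ is critical and $f(\sigma)$ a critical value. With critical values $c_0<\dots<c_{m-1}$, the level subcomplexes $G_{c_i}=\{\sigma:f(\sigma)\le c_i\}$ form a filtration whose persistent homology (over a field) gives the persistence diagram $D_f$; $f,g$ are persistence equivalent if $D_f=D_g$. If $f,g$ have critical values $a_0<\dots<a_{m-1}$ and $c_0<\dots<c_{m-1}$ respectively (same number $m$), they are graph equivalent if $G_{a_i}\cong G_{c_i}$ as graphs for every $0\le i\le m-1$ (level subcomplexes taken for $f$ and $g$ respectively). *)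

theory Defs
  imports Complex_Main "HOL-Library.Function_Algebras" "HOL-Library.Extended_Real"
begin

text \<open>Its simplices are the singletons {v} (vertices) and the edges;
a vertex v is an endpoint of e iff {v} is a proper subset of e.\<close>

definition simple_graph :: "'a set \<Rightarrow> 'a set set \<Rightarrow> bool" where
  "simple_graph V E \<longleftrightarrow> finite V \<and>
     (\<forall>e\<in>E. \<exists>u v. u \<in> V \<and> v \<in> V \<and> u \<noteq> v \<and> e = {u, v})"

definition adj :: "'a set set \<Rightarrow> 'a \<Rightarrow> 'a \<Rightarrow> bool" where
  "adj E u v \<longleftrightarrow> u \<noteq> v \<and> {u, v} \<in> E"

definition connected_graph :: "'a set \<Rightarrow> 'a set set \<Rightarrow> bool" where
  "connected_graph V E \<longleftrightarrow>
     (\<forall>u\<in>V. \<forall>v\<in>V. (u, v) \<in> {(x, y). adj E x y}\<^sup>*)"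

definition has_cycle :: "'a set \<Rightarrow> 'a set set \<Rightarrow> bool" where
  "has_cycle V E \<longleftrightarrow> (\<exists>cs. 3 \<le> length cs \<and> distinct cs \<and> set cs \<subseteq> V \<and>
     (\<forall>i < length cs. adj E (cs ! i) (cs ! ((i + 1) mod length cs))))"

definition is_tree :: "'a set \<Rightarrow> 'a set set \<Rightarrow> bool" where
  "is_tree V E \<longleftrightarrow> simple_graph V E \<and> V \<noteq> {} \<and> connected_graph V E \<and> \<not> has_cycle V E"

definition simplices :: "'a set \<Rightarrow> 'a set set \<Rightarrow> 'a set set" where
  "simplices V E = (\<lambda>v. {v}) ` V \<union> E"

definition dmf :: "'a set \<Rightarrow> 'a set set \<Rightarrow> ('a set \<Rightarrow> real) \<Rightarrow> bool" where
  "dmf V E f \<longleftrightarrow> (let S = simplices V E; n = card S in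
     (\<forall>\<sigma>\<in>S. 0 \<le> f \<sigma> \<and> f \<sigma> \<le> real n) \<and>
     (\<forall>v\<in>V. \<forall>e\<in>E. v \<in> e \<longrightarrow> f {v} \<le> f e) \<and>
     (\<exists>\<sigma>\<in>S. f \<sigma> = 0) \<and>
     (\<forall>\<sigma>\<in>S. card {\<tau>\<in>S. f \<tau> = f \<sigma>} \<le> 2) \<and>
     (\<forall>\<sigma>\<in>S. \<forall>\<tau>\<in>S. \<sigma> \<noteq> \<tau> \<and> f \<sigma> = f \<tau> \<longrightarrow> \<sigma> \<subset> \<tau> \<or> \<tau> \<subset> \<sigma>) \<and>
     (\<forall>\<sigma>\<in>S. card {\<tau>\<in>S. f \<tau> = f \<sigma>} = 1 \<longrightarrow> f \<sigma> \<in> \<nat>))"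

definition critical :: "'a set \<Rightarrow> 'a set set \<Rightarrow> ('a set \<Rightarrow> real) \<Rightarrow> 'a set \<Rightarrow> bool" where
  "critical V E f \<sigma> \<longleftrightarrow> \<sigma> \<in> simplices V E \<and>
     card {\<tau>\<in>simplices V E. f \<tau> = f \<sigma>} = 1"

definition crit_vals :: "'a set \<Rightarrow> 'a set set \<Rightarrow> ('a set \<Rightarrow> real) \<Rightarrow> real list" where
  "crit_vals V E f = sorted_list_of_set (f ` {\<sigma>. critical V E f \<sigma>})"

definition level :: "'a set \<Rightarrow> 'a set set \<Rightarrow> ('a set \<Rightarrow> real) \<Rightarrow> real \<Rightarrow> 'a set set" where
  "level V E f c = {\<sigma>\<in>simplices V E. f \<sigma> \<le> c}"

definition cverts :: "'a set set \<Rightarrow> 'a set" where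
  "cverts K = {v. {v} \<in> K}"

definition complex_iso :: "'a set set \<Rightarrow> 'b set set \<Rightarrow> bool" where
  "complex_iso K L \<longleftrightarrow> (\<exists>\<phi>. bij_betw \<phi> (cverts K) (cverts L) \<and>
     (\<forall>u\<in>cverts K. \<forall>v\<in>cverts K. u \<noteq> v \<longrightarrow> ({u, v} \<in> K \<longleftrightarrow> {\<phi> u, \<phi> v} \<in> L)))"

definition graph_equiv :: "'a set \<Rightarrow> 'a set set \<Rightarrow> ('a set \<Rightarrow> real) \<Rightarrow> ('a set \<Rightarrow> real) \<Rightarrow> bool" where
  "graph_equiv V E f g \<longleftrightarrow> length (crit_vals V E f) = length (crit_vals V E g) \<and>
     (\<forall>i < length (crit_vals V E f).
        complex_iso (level V E f (crit_vals V E f ! i)) (level V E g (crit_vals V E g ! i)))"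

text \<open>p-chains of a complex K with coefficients in a field 'k: finitely supported
(K is finite) functions on the p-simplices (sets of card p+1).\<close>
definition chains :: "'a set set \<Rightarrow> nat \<Rightarrow> ('a set \<Rightarrow> 'k::field) set" where
  "chains K p = {x. \<forall>\<sigma>. x \<sigma> \<noteq> 0 \<longrightarrow> \<sigma> \<in> K \<and> card \<sigma> = Suc p}"

text \<open>Boundary of 1-chains, edge {u,v} with u < v oriented as [u,v], so its
boundary is v - u.  Graphs have no simplices of dimension 2 or more, so all
other boundary maps are zero.\<close>
definition bd1 :: "('a::linorder set \<Rightarrow> 'k::field) \<Rightarrow> 'a set \<Rightarrow> 'k" where
  "bd1 x = (\<lambda>\<sigma>. if card \<sigma> = 1 then
      (\<Sum>e\<in>{e. card e = 2 \<and> \<sigma> \<subset> e \<and> x e \<noteq> 0}.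
          if the_elem \<sigma> = Max e then x e else - x e)
    else 0)"

definition bd :: "nat \<Rightarrow> ('a::linorder set \<Rightarrow> 'k::field) \<Rightarrow> 'a set \<Rightarrow> 'k" where
  "bd p x = (if p = 1 then bd1 x else 0)"

definition cycles :: "'a::linorder set set \<Rightarrow> nat \<Rightarrow> ('a set \<Rightarrow> 'k::field) set" where
  "cycles K p = {x \<in> chains K p. bd p x = 0}"

definition bdries :: "'a::linorder set set \<Rightarrow> nat \<Rightarrow> ('a set \<Rightarrow> 'k::field) set" where
  "bdries K p = bd (Suc p) ` chains K (Suc p)"

definition fdim :: "('b \<Rightarrow> 'k::field) set \<Rightarrow> nat" where
  "fdim A = vector_space.dim (\<lambda>c x. (\<lambda>i. c * x i)) A"

text \<open>Persistent Betti number beta_p^{K,L} = dim Z_p(K) - dim (Z_p(K) \<inter> B_p(L)),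
the rank of H_p(K) -> H_p(L) induced by inclusion.\<close>
definition pers_betti :: "'k::field itself \<Rightarrow> 'a::linorder set set \<Rightarrow> 'a set set \<Rightarrow> nat \<Rightarrow> int" where
  "pers_betti _ K L p =
     int (fdim (cycles K p :: ('a set \<Rightarrow> 'k) set)) - int (fdim (cycles K p \<inter> bdries L p :: ('a set \<Rightarrow> 'k) set))"

text \<open>Persistence diagram in dimension p of the filtration by level subcomplexes
at the critical values, as a multiplicity function on points (birth, death),
death = \<infinity> for essential classes.\<close>
definition pdiag :: "'k::field itself \<Rightarrow> 'a::linorder set \<Rightarrow> 'a set set \<Rightarrow> ('a set \<Rightarrow> real) \<Rightarrow> nat
    \<Rightarrow> real \<times> ereal \<Rightarrow> int" where
  "pdiag k V E f p = (\<lambda>pt.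
     (let cs = crit_vals V E f; m = length cs;
          \<beta> = (\<lambda>i j. pers_betti k (level V E f (cs ! i)) (level V E f (cs ! j)) p);
          \<beta>' = (\<lambda>i j. if i = 0 then 0 else \<beta> (i - 1) j);
          mu = (\<lambda>i j. (\<beta> i (j - 1) - \<beta> i j) - (\<beta>' i (j - 1) - \<beta>' i j));
          mu_inf = (\<lambda>i. \<beta> i (m - 1) - \<beta>' i (m - 1))
      in (\<Sum>i<m. \<Sum>j\<in>{i<..<m}. if pt = (cs ! i, ereal (cs ! j)) then mu i j else 0)
       + (\<Sum>i<m. if pt = (cs ! i, \<infinity>) then mu_inf i else 0)))"

definition pers_equiv :: "'k::field itself \<Rightarrow> 'a::linorder set \<Rightarrow> 'a set set
    \<Rightarrow> ('a set \<Rightarrow> real) \<Rightarrow> ('a set \<Rightarrow> real) \<Rightarrow> bool" where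
  "pers_equiv k V E f g \<longleftrightarrow> (\<forall>p. pdiag k V E f p = pdiag k V E g p)"

end

theory Submission
  imports Defs
begin


interpretation fv: vector_space "\<lambda>(c::'k::field) (x::'b \<Rightarrow> 'k). (\<lambda>i. c * x i)"
  by unfold_locales (auto simp: fun_eq_iff algebra_simps)

lemma fdim_fv: "fdim A = fv.dim A" unfolding fdim_def ..

lemma sum_fun_apply: "(sum f A) t = (\<Sum>s\<in>A. f s t)"
  by (induction A rule: infinite_finite_induct) auto

definition dl :: "'b \<Rightarrow> 'b \<Rightarrow> 'k::field" where "dl s = (\<lambda>t. if t = s then 1 else 0)"

lemma dl_inj: "inj dl"
  by (rule injI) (metis dl_def one_neq_zero)

lemma fdim_supp:
  assumes "finite A"
  shows "fdim {x :: 'b \<Rightarrow> 'k::field. \<forall>\<sigma>. x \<sigma> \<noteq> 0 \<longrightarrow> \<sigma> \<in> A} = card A"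
  unfolding fdim_fv
proof (rule fv.dim_unique[where B = "dl ` A"])
  show "dl ` A \<subseteq> {x :: 'b \<Rightarrow> 'k. \<forall>\<sigma>. x \<sigma> \<noteq> 0 \<longrightarrow> \<sigma> \<in> A}"
    by (auto simp: dl_def split: if_splits)
  show "{x :: 'b \<Rightarrow> 'k. \<forall>\<sigma>. x \<sigma> \<noteq> 0 \<longrightarrow> \<sigma> \<in> A} \<subseteq> fv.span (dl ` A)"
  proof
    fix x :: "'b \<Rightarrow> 'k" assume x: "x \<in> {x. \<forall>\<sigma>. x \<sigma> \<noteq> 0 \<longrightarrow> \<sigma> \<in> A}"
    have "x = (\<Sum>s\<in>A. (\<lambda>i. x s * dl s i))"
    proof
      fix t
      have "(\<Sum>s\<in>A. (\<lambda>i. x s * dl s i)) t = (\<Sum>s\<in>A. x s * dl s t)" by (simp add: sum_fun_apply)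
      also have "\<dots> = (\<Sum>s\<in>A. if t = s then x s else 0)" by (rule sum.cong) (auto simp: dl_def)
      also have "\<dots> = x t" using x assms by (auto simp: sum.delta)
      finally show "x t = (\<Sum>s\<in>A. (\<lambda>i. x s * dl s i)) t" by simp
    qed
    also have "\<dots> \<in> fv.span (dl ` A)"
      by (intro fv.span_sum fv.span_scale fv.span_base) auto
    finally show "x \<in> fv.span (dl ` A)" .
  qed
  show "fv.independent (dl ` A :: ('b \<Rightarrow> 'k) set)"
  proof
    assume "fv.dependent (dl ` A :: ('b \<Rightarrow> 'k) set)"
    then obtain u where u: "\<exists>v\<in>dl ` A. u v \<noteq> (0::'k)" "(\<Sum>v\<in>dl ` A. (\<lambda>i. u v * v i)) = 0"
      using fv.dependent_finite[of "dl ` A"] assms by auto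
    from u(1) obtain s where s: "s \<in> A" "u (dl s) \<noteq> 0" by auto
    have "0 = (\<Sum>v\<in>dl ` A. (\<lambda>i. u v * v i)) s" using u(2) by simp
    also have "\<dots> = (\<Sum>t\<in>A. u (dl t) * dl t s)"
      by (simp add: sum_fun_apply sum.reindex inj_on_def dl_inj[THEN injD])
    also have "\<dots> = (\<Sum>t\<in>A. if s = t then u (dl t) else 0)" by (rule sum.cong) (auto simp: dl_def)
    also have "\<dots> = u (dl s)" using s assms by (simp add: sum.delta)
    finally show False using s by simp
  qed
  show "card (dl ` A :: ('b \<Rightarrow> 'k) set) = card A"
    by (simp add: card_image inj_on_def dl_inj[THEN injD])
qed

lemma fdim_sub0: "A \<subseteq> {0} \<Longrightarrow> fdim A = 0"
  unfolding fdim_fv by (rule fv.dim_unique[where B="{}"]) (auto simp: fv.independent_empty)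

lemma fdim_line: "(v::'b\<Rightarrow>'k::field) \<noteq> 0 \<Longrightarrow> A = range (\<lambda>c i. c * v i) \<Longrightarrow> fdim A = 1"
  unfolding fdim_fv by (rule fv.dim_unique[where B="{v}"]) (auto simp: fv.span_singleton fv.independent_insert intro: range_eqI[where x=1])



definition V0 :: "nat set" where "V0 = {0,1,2}"
definition E0 :: "nat set set" where "E0 = {{0,1},{1,2}}"

definition f1 :: "nat set \<Rightarrow> real" where
  "f1 \<sigma> = (if \<sigma>={0} then 0 else if \<sigma>={1} then 1 else if \<sigma>={0,1} then 2 else 3)"
definition f2 :: "nat set \<Rightarrow> real" where
  "f2 \<sigma> = (if \<sigma>={0} then 0 else if \<sigma>={1} then 1 else if \<sigma>={0,1} then 4 else 9/2)"
definition g :: "nat set \<Rightarrow> real" where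
  "g \<sigma> = (if \<sigma>={0} then 0 else if \<sigma>={2} then 1 else if \<sigma>={1,2} then 2 else 3/2)"

lemma filt_insert: "{x \<in> insert a A. P x} = (if P a then insert a {x\<in>A. P x} else {x\<in>A. P x})"
  by auto
lemma filt_empty: "{x \<in> {}. P x} = {}" by auto

lemma filt_disj: "{x. (x = a \<or> Q x) \<and> P x} = (if P a then insert a {x. Q x \<and> P x} else {x. Q x \<and> P x})"
  by auto
lemma filt_one: "{x. x = a \<and> P x} = (if P a then {a} else {})"
  by auto
lemma ball_ins: "(\<forall>x\<in>insert a A. P x) = (P a \<and> (\<forall>x\<in>A. P x))" by auto
lemmas ss = filt_insert filt_empty doubleton_eq_iff

lemma S0: "simplices V0 E0 = {{0},{1},{2},{0,1},{1,2}}"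
  by (auto simp: simplices_def V0_def E0_def)

lemma tree: "is_tree V0 E0"
proof -
  have e1: "\<exists>u v. u \<in> V0 \<and> v \<in> V0 \<and> u \<noteq> v \<and> {0,1} = {u, v}"
    by (rule exI[of _ 0], rule exI[of _ 1]) (simp add: V0_def)
  have e2: "\<exists>u v. u \<in> V0 \<and> v \<in> V0 \<and> u \<noteq> v \<and> {1,2} = {u, v}"
    by (rule exI[of _ 1], rule exI[of _ 2]) (simp add: V0_def)
  have sg: "simple_graph V0 E0" using e1 e2 by (auto simp: simple_graph_def V0_def E0_def)
  have a01: "adj E0 0 1" "adj E0 1 0" "adj E0 1 2" "adj E0 2 1"
    by (auto simp: adj_def E0_def insert_commute)
  have conn: "connected_graph V0 E0"
    unfolding connected_graph_def V0_def
    using a01 by (auto intro: converse_rtrancl_into_rtrancl)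
  have nc: "\<not> has_cycle V0 E0"
  proof
    assume "has_cycle V0 E0"
    then obtain cs where cs: "3 \<le> length cs" "distinct cs" "set cs \<subseteq> V0"
      "\<forall>i < length cs. adj E0 (cs ! i) (cs ! ((i + 1) mod length cs))"
      unfolding has_cycle_def by blast
    have "length cs = card (set cs)" using cs(2) by (simp add: distinct_card)
    also have "\<dots> \<le> card V0" using cs(3) by (intro card_mono) (auto simp: V0_def)
    also have "\<dots> = 3" by (simp add: V0_def)
    finally have l3: "length cs = 3" using cs(1) by simp
    then obtain a b c where abc: "cs = [a,b,c]"
      by (metis (no_types, lifting) length_0_conv length_Suc_conv numeral_3_eq_3)
    have "adj E0 a b" "adj E0 b c" "adj E0 c a"
      using cs(4) abc by (auto dest: spec[of _ 0] spec[of _ 1] spec[of _ 2])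
    moreover have "a \<in> V0" "b \<in> V0" "c \<in> V0" "distinct [a,b,c]" using cs abc by auto
    ultimately show False
      by (auto simp: adj_def E0_def V0_def doubleton_eq_iff)
  qed
  show ?thesis using sg conn nc by (auto simp: is_tree_def V0_def)
qed

lemma f1v[simp]: "f1 {0} = 0" "f1 {1} = 1" "f1 {2} = 3" "f1 {0,1} = 2" "f1 {1,2} = 3"
  by (auto simp: f1_def doubleton_eq_iff)
lemma f2v[simp]: "f2 {0} = 0" "f2 {1} = 1" "f2 {2} = 9/2" "f2 {0,1} = 4" "f2 {1,2} = 9/2"
  by (auto simp: f2_def doubleton_eq_iff)
lemma gv[simp]: "g {0} = 0" "g {1} = 3/2" "g {2} = 1" "g {0,1} = 3/2" "g {1,2} = 2"
  by (auto simp: g_def doubleton_eq_iff)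

lemma f1vs[simp]: "f1 {Suc 0} = 1" "f1 {0, Suc 0} = 2" "f1 {Suc 0, 2} = 3"
  by (auto simp: f1_def doubleton_eq_iff)
lemma f2vs[simp]: "f2 {Suc 0} = 1" "f2 {0, Suc 0} = 4" "f2 {Suc 0, 2} = 9/2"
  by (auto simp: f2_def doubleton_eq_iff)
lemma gvs[simp]: "g {Suc 0} = 3/2" "g {0, Suc 0} = 3/2" "g {Suc 0, 2} = 2"
  by (auto simp: g_def doubleton_eq_iff)

lemma card_S0: "card (simplices V0 E0) = 5" by (simp add: S0 doubleton_eq_iff)

lemma T1: "card {\<tau> \<in> {{0::nat},{1},{2},{0,1},{1,2}}. f1 \<tau> = 3} = 2"
  apply (simp only: filt_insert filt_empty)
  apply (simp add: doubleton_eq_iff)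
  done

lemma dmf_f1: "dmf V0 E0 f1"
  unfolding dmf_def Let_def card_S0 S0
  apply (simp only: ball_ins ball_empty)
  apply (simp only: filt_insert filt_empty f1v)
  apply (simp add: V0_def E0_def psubset_eq doubleton_eq_iff)
  done
lemma dmf_f2: "dmf V0 E0 f2"
  unfolding dmf_def Let_def card_S0 S0
  apply (simp only: ball_ins ball_empty)
  apply (simp only: filt_insert filt_empty f2v)
  apply (simp add: V0_def E0_def psubset_eq doubleton_eq_iff)
  done
lemma dmf_g: "dmf V0 E0 g"
  unfolding dmf_def Let_def card_S0 S0
  apply (simp only: ball_ins ball_empty)
  apply (simp only: filt_insert filt_empty gv)
  apply (simp add: V0_def E0_def psubset_eq doubleton_eq_iff)
  done

lemma crit_f1: "crit_vals V0 E0 f1 = [0,1,2]"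
proof -
  have "{\<sigma>. critical V0 E0 f1 \<sigma>} = {\<sigma> \<in> {{0},{1},{2},{0,1},{1,2}}. card {\<tau> \<in> {{0},{1},{2},{0,1},{1,2}}. f1 \<tau> = f1 \<sigma>} = 1}"
    unfolding critical_def S0 by simp
  also have "\<dots> = {{0},{1},{0,1}}"
    apply (simp only: filt_insert filt_empty f1v)
    apply (simp add: doubleton_eq_iff)
    done
  finally have "{\<sigma>. critical V0 E0 f1 \<sigma>} = {{0},{1},{0,1}}" .
  then show ?thesis unfolding crit_vals_def by simp
qed
lemma crit_f2: "crit_vals V0 E0 f2 = [0,1,4]"
proof -
  have "{\<sigma>. critical V0 E0 f2 \<sigma>} = {\<sigma> \<in> {{0},{1},{2},{0,1},{1,2}}. card {\<tau> \<in> {{0},{1},{2},{0,1},{1,2}}. f2 \<tau> = f2 \<sigma>} = 1}"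
    unfolding critical_def S0 by simp
  also have "\<dots> = {{0},{1},{0,1}}"
    apply (simp only: filt_insert filt_empty f2v)
    apply (simp add: doubleton_eq_iff)
    done
  finally have "{\<sigma>. critical V0 E0 f2 \<sigma>} = {{0},{1},{0,1}}" .
  then show ?thesis unfolding crit_vals_def by simp
qed
lemma crit_g: "crit_vals V0 E0 g = [0,1,2]"
proof -
  have "{\<sigma>. critical V0 E0 g \<sigma>} = {\<sigma> \<in> {{0},{1},{2},{0,1},{1,2}}. card {\<tau> \<in> {{0},{1},{2},{0,1},{1,2}}. g \<tau> = g \<sigma>} = 1}"
    unfolding critical_def S0 by simp
  also have "\<dots> = {{0},{2},{1,2}}"
    apply (simp only: filt_insert filt_empty gv)
    apply (simp add: doubleton_eq_iff)
    done
  finally have "{\<sigma>. critical V0 E0 g \<sigma>} = {{0},{2},{1,2}}" .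
  then show ?thesis unfolding crit_vals_def by simp
qed

definition "K0 = {{0::nat}}"
definition "K1 = {{0::nat},{1}}"
definition "K2 = {{0::nat},{1},{0,1}}"
definition "K1' = {{0::nat},{2}}"
definition "K2' = {{0::nat},{1},{2},{0,1},{1,2}}"

lemma lev_f1: "level V0 E0 f1 0 = K0" "level V0 E0 f1 1 = K1" "level V0 E0 f1 2 = K2"
  by (auto simp: level_def S0 K0_def K1_def K2_def)
lemma lev_f2: "level V0 E0 f2 0 = K0" "level V0 E0 f2 1 = K1" "level V0 E0 f2 4 = K2"
  by (auto simp: level_def S0 K0_def K1_def K2_def)
lemma lev_g: "level V0 E0 g 0 = K0" "level V0 E0 g 1 = K1'" "level V0 E0 g 2 = K2'"
  by (auto simp: level_def S0 K0_def K1'_def K2'_def)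



definition d10 :: "nat set \<Rightarrow> 'k::field" where
  "d10 = (\<lambda>\<sigma>. (if \<sigma> = {1} then 1 else 0) - (if \<sigma> = {0} then 1 else 0))"
definition d21 :: "nat set \<Rightarrow> 'k::field" where
  "d21 = (\<lambda>\<sigma>. (if \<sigma> = {2} then 1 else 0) - (if \<sigma> = {1} then 1 else 0))"

lemma dvals[simp]:
  "d10 {0} = (-1 :: 'k::field)" "d10 {1} = (1::'k)" "d10 {2} = (0::'k)"
  "d21 {0} = (0 :: 'k::field)" "d21 {1} = (-1::'k)" "d21 {2} = (1::'k)"
  "d10 {Suc 0} = (1::'k)" "d21 {Suc 0} = (-1::'k)"
  by (simp_all add: d10_def d21_def)

lemma Max01: "Max {0::nat, 1} = 1" by simp
lemma Max12: "Max {1::nat, 2} = 2" by simp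

lemma bd1_form:
  assumes "\<forall>e. x e \<noteq> 0 \<longrightarrow> e = {0,1} \<or> e = {1::nat,2}"
  shows "bd1 (x :: nat set \<Rightarrow> 'k::field) = (\<lambda>\<sigma>. x {0,1} * d10 \<sigma> + x {1,2} * d21 \<sigma>)"
proof (rule ext)
  fix \<sigma> :: "nat set"
  show "bd1 x \<sigma> = x {0,1} * d10 \<sigma> + x {1,2} * d21 \<sigma>"
  proof (cases "card \<sigma> = 1")
    case False
    then have "\<sigma> \<noteq> {0}" "\<sigma> \<noteq> {1}" "\<sigma> \<noteq> {2}" by auto
    then show ?thesis using False by (simp add: bd1_def d10_def d21_def)
  next
    case True
    then obtain v where \<sigma>: "\<sigma> = {v}" by (auto simp: card_1_singleton_iff)
    define h where "h = (\<lambda>e. if the_elem \<sigma> = Max e then x e else - x e)"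
    have sub: "{e. card e = 2 \<and> \<sigma> \<subset> e \<and> x e \<noteq> 0} \<subseteq> {e \<in> {{0,1},{1,2}}. v \<in> e}"
    proof
      fix e assume e: "e \<in> {e. card e = 2 \<and> \<sigma> \<subset> e \<and> x e \<noteq> 0}"
      hence "x e \<noteq> 0" "\<sigma> \<subset> e" by simp_all
      with assms \<sigma> show "e \<in> {e \<in> {{0,1},{1,2}}. v \<in> e}" by blast
    qed
    have "sum h {e. card e = 2 \<and> \<sigma> \<subset> e \<and> x e \<noteq> 0} = sum h {e \<in> {{0,1},{1,2}}. v \<in> e}"
    proof (rule sum.mono_neutral_left[OF _ sub])
      show "finite {e \<in> {{0::nat,1},{1,2}}. v \<in> e}" by simp
      show "\<forall>i\<in>{e \<in> {{0::nat, 1}, {1, 2}}. v \<in> e} - {e. card e = 2 \<and> \<sigma> \<subset> e \<and> x e \<noteq> 0}. h i = 0"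
      proof
        fix i assume i: "i \<in> {e \<in> {{0::nat, 1}, {1, 2}}. v \<in> e} - {e. card e = 2 \<and> \<sigma> \<subset> e \<and> x e \<noteq> 0}"
        have c2: "card i = 2" using i by auto
        have "\<sigma> \<noteq> i" using c2 True by auto
        moreover have "\<sigma> \<subseteq> i" using \<sigma> i by auto
        ultimately have "\<sigma> \<subset> i" by blast
        with i c2 have "x i = 0" by blast
        then show "h i = 0" by (simp add: h_def)
      qed
    qed
    moreover have "bd1 x \<sigma> = sum h {e. card e = 2 \<and> \<sigma> \<subset> e \<and> x e \<noteq> 0}"
      using True by (simp add: bd1_def h_def)
    moreover have "sum h {e \<in> {{0,1},{1,2}}. v \<in> e} = x {0,1} * d10 \<sigma> + x {1,2} * d21 \<sigma>"
    proof -
      consider "v = 0" | "v = 1" | "v = 2" | "v \<noteq> 0 \<and> v \<noteq> 1 \<and> v \<noteq> 2" by blast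
      then show ?thesis
      proof cases
        case 1
        then have "{e \<in> {{0,1},{1,2}}. v \<in> e} = {{0::nat,1}}" by auto
        then show ?thesis using 1 \<sigma> by (simp add: h_def Max01)
      next
        case 2
        then have "{e \<in> {{0,1},{1,2}}. v \<in> e} = {{0::nat,1},{1,2}}" by auto
        then show ?thesis using 2 \<sigma> by (simp add: h_def Max01 Max12 doubleton_eq_iff)
      next
        case 3
        then have "{e \<in> {{0,1},{1,2}}. v \<in> e} = {{1::nat,2}}" by auto
        then show ?thesis using 3 \<sigma> by (simp add: h_def Max12)
      next
        case 4
        then have eq: "{e \<in> {{0,1},{1,2}}. v \<in> e} = {}" by auto
        show ?thesis unfolding eq using 4 \<sigma> by (simp add: d10_def d21_def)
      qed
    qed
    ultimately show ?thesis by simp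
  qed
qed

lemma supp1:
  assumes "x \<in> chains K 1" "K \<subseteq> K2'"
  shows "\<forall>e. x e \<noteq> 0 \<longrightarrow> e = {0,1} \<or> e = {1::nat,2}"
proof (intro allI impI)
  fix e assume "x e \<noteq> 0"
  with assms(1) have "e \<in> K" "card e = 2" by (auto simp: chains_def)
  with assms(2) show "e = {0,1} \<or> e = {1,2}" by (auto simp: K2'_def)
qed

definition B2' :: "(nat set \<Rightarrow> 'k::field) set" where
  "B2' = {\<lambda>\<sigma>. a * d10 \<sigma> + b * d21 \<sigma> | a b. True}"

lemma bdK: "K \<subseteq> K2' \<Longrightarrow> (bdries K 0 :: (nat set \<Rightarrow> 'k::field) set) =
   (\<lambda>x. \<lambda>\<sigma>. x {0,1} * d10 \<sigma> + x {1,2} * d21 \<sigma>) ` chains K 1"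
proof -
  assume K: "K \<subseteq> K2'"
  have e: "(bdries K 0 :: (nat set \<Rightarrow> 'k::field) set) = bd 1 ` chains K 1" by (simp add: bdries_def)
  have h: "bd 1 x = (\<lambda>\<sigma>. x {0,1} * d10 \<sigma> + x {1,2} * d21 \<sigma>)" if "x \<in> chains K 1" for x :: "nat set \<Rightarrow> 'k"
  proof -
    have "bd 1 x = bd1 x" by (simp add: bd_def)
    also have "\<dots> = (\<lambda>\<sigma>. x {0,1} * d10 \<sigma> + x {1,2} * d21 \<sigma>)"
      by (rule bd1_form[OF supp1[OF that K]])
    finally show ?thesis .
  qed
  show ?thesis unfolding e by (rule image_cong[OF refl h])
qed

lemma bd_sub: "K \<subseteq> K2' \<Longrightarrow> (bdries K 0 :: (nat set \<Rightarrow> 'k::field) set) \<subseteq> B2'"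
  by (auto simp: bdK B2'_def)

lemma bd_small: assumes "K \<subseteq> K2'" "{0,1} \<notin> K" "{1,2} \<notin> K"
  shows "(bdries K 0 :: (nat set \<Rightarrow> 'k::field) set) \<subseteq> {0}"
proof
  fix y :: "nat set \<Rightarrow> 'k" assume "y \<in> bdries K 0"
  then obtain x where x: "x \<in> chains K 1" "y = (\<lambda>\<sigma>. x {0,1} * d10 \<sigma> + x {1,2} * d21 \<sigma>)"
    using bdK[OF assms(1)] by auto
  have "x {0,1} = 0" "x {1,2} = 0" using x(1) assms(2,3) by (auto simp: chains_def)
  then show "y \<in> {0}" using x(2) by auto
qed

lemma bd_K2: "(bdries K2 0 :: (nat set \<Rightarrow> 'k::field) set) = range (\<lambda>c \<sigma>. c * d10 \<sigma>)"
proof -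
  have K: "K2 \<subseteq> K2'" by (auto simp: K2_def K2'_def)
  show ?thesis
  proof (rule set_eqI, rule iffI)
    fix y :: "nat set \<Rightarrow> 'k" assume "y \<in> bdries K2 0"
    then obtain x where x: "x \<in> chains K2 1" "y = (\<lambda>\<sigma>. x {0,1} * d10 \<sigma> + x {1,2} * d21 \<sigma>)"
      using bdK[OF K] by auto
    have "x {1,2} = 0" using x(1) by (auto simp: chains_def K2_def doubleton_eq_iff)
    then show "y \<in> range (\<lambda>c \<sigma>. c * d10 \<sigma>)" using x(2) by auto
  next
    fix y :: "nat set \<Rightarrow> 'k" assume "y \<in> range (\<lambda>c \<sigma>. c * d10 \<sigma>)"
    then obtain c where y: "y = (\<lambda>\<sigma>. c * d10 \<sigma>)" by auto
    define x :: "nat set \<Rightarrow> 'k" where "x = (\<lambda>e. if e = {0,1} then c else 0)"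
    have "x \<in> chains K2 1" by (auto simp: x_def chains_def K2_def)
    moreover have "y = (\<lambda>\<sigma>. x {0,1} * d10 \<sigma> + x {1,2} * d21 \<sigma>)"
      by (simp add: x_def y doubleton_eq_iff)
    ultimately show "y \<in> bdries K2 0" using bdK[OF K] by auto
  qed
qed

lemma bd_K2': "(bdries K2' 0 :: (nat set \<Rightarrow> 'k::field) set) = B2'"
proof (rule set_eqI, rule iffI)
  fix y :: "nat set \<Rightarrow> 'k" assume "y \<in> bdries K2' 0"
  then show "y \<in> B2'" using bd_sub[of K2'] by auto
next
  fix y :: "nat set \<Rightarrow> 'k" assume "y \<in> B2'"
  then obtain a b where y: "y = (\<lambda>\<sigma>. a * d10 \<sigma> + b * d21 \<sigma>)" by (auto simp: B2'_def)
  define x :: "nat set \<Rightarrow> 'k" where "x = (\<lambda>e. if e = {0,1} then a else if e = {1,2} then b else 0)"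
  have "x \<in> chains K2' 1" by (auto simp: x_def chains_def K2'_def)
  moreover have "y = (\<lambda>\<sigma>. x {0,1} * d10 \<sigma> + x {1,2} * d21 \<sigma>)"
    by (simp add: x_def y doubleton_eq_iff)
  ultimately show "y \<in> bdries K2' 0" using bdK[of K2'] by auto
qed

lemma cyc0: "(cycles K 0 :: (nat set \<Rightarrow> 'k::field) set) = {x. \<forall>\<sigma>. x \<sigma> \<noteq> 0 \<longrightarrow> \<sigma> \<in> {\<sigma>\<in>K. card \<sigma> = 1}}"
  by (auto simp: cycles_def chains_def bd_def)

lemma fdim_cyc0: "finite K \<Longrightarrow> fdim (cycles K 0 :: (nat set \<Rightarrow> 'k::field) set) = card {\<sigma>\<in>K. card \<sigma> = 1}"
  unfolding cyc0 by (rule fdim_supp) simp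

lemma vK: "{\<sigma>\<in>K0. card \<sigma> = 1} = {{0}}" "{\<sigma>\<in>K1. card \<sigma> = 1} = {{0},{1}}"
  "{\<sigma>\<in>K2. card \<sigma> = 1} = {{0},{1}}" "{\<sigma>\<in>K1'. card \<sigma> = 1} = {{0},{2}}"
  "{\<sigma>\<in>K2'. card \<sigma> = 1} = {{0},{1},{2}}"
  by (auto simp: K0_def K1_def K2_def K1'_def K2'_def)

lemma fdZ: "fdim (cycles K0 0 :: (nat set \<Rightarrow> 'k::field) set) = 1"
  "fdim (cycles K1 0 :: (nat set \<Rightarrow> 'k::field) set) = 2"
  "fdim (cycles K2 0 :: (nat set \<Rightarrow> 'k::field) set) = 2"
  "fdim (cycles K1' 0 :: (nat set \<Rightarrow> 'k::field) set) = 2"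
  "fdim (cycles K2' 0 :: (nat set \<Rightarrow> 'k::field) set) = 3"
proof -
  have fin: "finite K0" "finite K1" "finite K2" "finite K1'" "finite K2'"
    by (simp_all add: K0_def K1_def K2_def K1'_def K2'_def)
  show "fdim (cycles K0 0 :: (nat set \<Rightarrow> 'k::field) set) = 1"
    unfolding fdim_cyc0[OF fin(1)] vK by simp
  show "fdim (cycles K1 0 :: (nat set \<Rightarrow> 'k::field) set) = 2"
    unfolding fdim_cyc0[OF fin(2)] vK by simp
  show "fdim (cycles K2 0 :: (nat set \<Rightarrow> 'k::field) set) = 2"
    unfolding fdim_cyc0[OF fin(3)] vK by simp
  show "fdim (cycles K1' 0 :: (nat set \<Rightarrow> 'k::field) set) = 2"
    unfolding fdim_cyc0[OF fin(4)] vK by simp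
  show "fdim (cycles K2' 0 :: (nat set \<Rightarrow> 'k::field) set) = 3"
    unfolding fdim_cyc0[OF fin(5)] vK by simp
qed

lemma B2'_mem: "y \<in> B2' \<Longrightarrow> \<exists>a b. y = (\<lambda>\<sigma>. a * d10 \<sigma> + b * d21 \<sigma>)"
  by (auto simp: B2'_def)

lemma I0: assumes "K \<subseteq> K2'"
  shows "fdim ((cycles K0 0 :: (nat set \<Rightarrow> 'k::field) set) \<inter> bdries K 0) = 0"
proof (rule fdim_sub0, rule subsetI)
  fix y :: "nat set \<Rightarrow> 'k" assume y: "y \<in> cycles K0 0 \<inter> bdries K 0"
  then obtain a b where ab: "y = (\<lambda>\<sigma>. a * d10 \<sigma> + b * d21 \<sigma>)"
    using bd_sub[OF assms] B2'_mem by blast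
  have "y {1} = 0" "y {2} = 0" using y unfolding cyc0 vK by auto
  then have "a = 0" "b = 0" using ab by simp_all
  then show "y \<in> {0}" using ab by auto
qed

lemma I_small: assumes "K \<subseteq> K2'" "{0,1} \<notin> K" "{1,2} \<notin> K"
  shows "fdim ((cycles L 0 :: (nat set \<Rightarrow> 'k::field) set) \<inter> bdries K 0) = 0"
  using bd_small[OF assms, where 'k='k] by (intro fdim_sub0) auto

lemma d10_nz: "(d10 :: nat set \<Rightarrow> 'k::field) \<noteq> 0"
proof
  assume "(d10 :: nat set \<Rightarrow> 'k::field) = 0"
  then have "d10 {0} = (0::'k)" by simp
  then show False by simp
qed

lemma I1: "fdim ((cycles K1 0 :: (nat set \<Rightarrow> 'k::field) set) \<inter> bdries K2 0) = 1"
  "fdim ((cycles K2 0 :: (nat set \<Rightarrow> 'k::field) set) \<inter> bdries K2 0) = 1"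
proof -
  have sub: "range (\<lambda>c \<sigma>. c * d10 \<sigma>) \<subseteq> (cycles K 0 :: (nat set \<Rightarrow> 'k::field) set)"
    if "{\<sigma>\<in>K. card \<sigma> = 1} = {{0},{1}}" for K
    unfolding cyc0 that by (auto simp: d10_def split: if_splits)
  show "fdim ((cycles K1 0 :: (nat set \<Rightarrow> 'k::field) set) \<inter> bdries K2 0) = 1"
    using sub[OF vK(2)] by (intro fdim_line[OF d10_nz]) (auto simp: bd_K2)
  show "fdim ((cycles K2 0 :: (nat set \<Rightarrow> 'k::field) set) \<inter> bdries K2 0) = 1"
    using sub[OF vK(3)] by (intro fdim_line[OF d10_nz]) (auto simp: bd_K2)
qed

lemma I1': "fdim ((cycles K1' 0 :: (nat set \<Rightarrow> 'k::field) set) \<inter> bdries K2' 0) = 1"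
proof (rule fdim_line[of "\<lambda>\<sigma>. d10 \<sigma> + d21 \<sigma>"])
  show "(\<lambda>\<sigma>. d10 \<sigma> + d21 \<sigma>) \<noteq> (0 :: nat set \<Rightarrow> 'k)"
  proof
    assume "(\<lambda>\<sigma>. d10 \<sigma> + d21 \<sigma>) = (0 :: nat set \<Rightarrow> 'k)"
    then have "d10 {0} + d21 {0} = (0::'k)" by (metis zero_fun_apply)
    then show False by simp
  qed
  show "(cycles K1' 0 :: (nat set \<Rightarrow> 'k::field) set) \<inter> bdries K2' 0 = range (\<lambda>c i. c * (d10 i + d21 i))"
  proof (rule set_eqI, rule iffI)
    fix y :: "nat set \<Rightarrow> 'k" assume y: "y \<in> cycles K1' 0 \<inter> bdries K2' 0"
    then obtain a b where ab: "y = (\<lambda>\<sigma>. a * d10 \<sigma> + b * d21 \<sigma>)"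
      using bd_K2' B2'_mem by blast
    have "y {1} = 0" using y unfolding cyc0 vK by auto
    then have "a = b" using ab by simp
    then have "y = (\<lambda>\<sigma>. a * (d10 \<sigma> + d21 \<sigma>))" using ab by (simp add: algebra_simps)
    then show "y \<in> range (\<lambda>c i. c * (d10 i + d21 i))" by auto
  next
    fix y :: "nat set \<Rightarrow> 'k" assume "y \<in> range (\<lambda>c i. c * (d10 i + d21 i))"
    then obtain c where c: "y = (\<lambda>i. c * (d10 i + d21 i))" by auto
    have "y \<in> B2'" unfolding B2'_def c by (rule CollectI, rule exI[of _ c], rule exI[of _ c]) (simp add: algebra_simps)
    moreover have "y \<in> cycles K1' 0" unfolding cyc0 vK c by (auto simp: d10_def d21_def split: if_splits)
    ultimately show "y \<in> cycles K1' 0 \<inter> bdries K2' 0" by (simp add: bd_K2')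
  qed
qed

lemma fdim_B2': "fdim (B2' :: (nat set \<Rightarrow> 'k::field) set) = 2"
  unfolding fdim_fv
proof (rule fv.dim_unique[where B = "{d10, d21}"])
  show "{d10, d21} \<subseteq> (B2' :: (nat set \<Rightarrow> 'k::field) set)"
  proof -
    have "d10 \<in> (B2' :: (nat set \<Rightarrow> 'k::field) set)"
      unfolding B2'_def by (rule CollectI, rule exI[of _ 1], rule exI[of _ 0]) simp
    moreover have "d21 \<in> (B2' :: (nat set \<Rightarrow> 'k::field) set)"
      unfolding B2'_def by (rule CollectI, rule exI[of _ 0], rule exI[of _ 1]) simp
    ultimately show ?thesis by simp
  qed
  show "(B2' :: (nat set \<Rightarrow> 'k::field) set) \<subseteq> fv.span {d10, d21}"
  proof
    fix y :: "nat set \<Rightarrow> 'k" assume "y \<in> B2'"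
    then obtain a b where ab: "y = (\<lambda>\<sigma>. a * d10 \<sigma> + b * d21 \<sigma>)" using B2'_mem by blast
    have "y = (\<lambda>i. a * d10 i) + (\<lambda>i. b * d21 i)" using ab by (simp add: fun_eq_iff)
    also have "\<dots> \<in> fv.span {d10, d21}"
      by (intro fv.span_add fv.span_scale fv.span_base) auto
    finally show "y \<in> fv.span {d10, d21}" .
  qed
  have ne: "(d10 :: nat set \<Rightarrow> 'k::field) \<noteq> d21"
  proof
    assume "(d10 :: nat set \<Rightarrow> 'k::field) = d21"
    then have "d10 {0} = (d21 {0} :: 'k)" by simp
    then show False by simp
  qed
  have nsp: "(d10 :: nat set \<Rightarrow> 'k::field) \<notin> fv.span {d21}"
  proof
    assume "(d10 :: nat set \<Rightarrow> 'k::field) \<in> fv.span {d21}"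
    then obtain k :: 'k where "d10 = (\<lambda>i. k * d21 i)" by (auto simp: fv.span_singleton)
    then have "d10 {0} = k * (d21 {0} :: 'k)" by metis
    then show False by simp
  qed
  have d21nz: "(d21 :: nat set \<Rightarrow> 'k::field) \<noteq> 0"
  proof
    assume "(d21 :: nat set \<Rightarrow> 'k::field) = 0"
    then have "d21 {2} = (0::'k)" by simp
    then show False by simp
  qed
  show "fv.independent {d10, d21 :: nat set \<Rightarrow> 'k::field}"
    using ne nsp d21nz by (simp add: fv.independent_insert fv.independent_empty)
  show "card {d10, d21 :: nat set \<Rightarrow> 'k::field} = 2" using ne by simp
qed

lemma I2': "fdim ((cycles K2' 0 :: (nat set \<Rightarrow> 'k::field) set) \<inter> bdries K2' 0) = 2"
proof -
  have "(B2' :: (nat set \<Rightarrow> 'k::field) set) \<subseteq> cycles K2' 0"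
    unfolding cyc0 vK B2'_def by (auto simp: d10_def d21_def split: if_splits)
  then have "(cycles K2' 0 :: (nat set \<Rightarrow> 'k::field) set) \<inter> bdries K2' 0 = B2'"
    by (auto simp: bd_K2')
  then show ?thesis by (simp add: fdim_B2')
qed



lemma pb0: "pers_betti TYPE('k::field) K L 0 =
   int (fdim (cycles K 0 :: (nat set \<Rightarrow> 'k) set)) - int (fdim ((cycles K 0 :: (nat set \<Rightarrow> 'k) set) \<inter> bdries L 0))"
  by (simp add: pers_betti_def)

lemma Ksub: "K0 \<subseteq> K2'" "K1 \<subseteq> K2'" "K2 \<subseteq> K2'" "K1' \<subseteq> K2'" "K2' \<subseteq> K2'"
  by (auto simp: K0_def K1_def K2_def K1'_def K2'_def)
lemma Knoe: "{0,1} \<notin> K0" "{1,2} \<notin> K0" "{0,1} \<notin> K1" "{1,2} \<notin> K1" "{0,1} \<notin> K1'" "{1,2} \<notin> K1'"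
  by (auto simp: K0_def K1_def K1'_def doubleton_eq_iff)

lemma pbv:
  "pers_betti TYPE('k::field) K0 K0 0 = 1"
  "pers_betti TYPE('k::field) K0 K1 0 = 1"
  "pers_betti TYPE('k::field) K0 K2 0 = 1"
  "pers_betti TYPE('k::field) K1 K1 0 = 2"
  "pers_betti TYPE('k::field) K1 K2 0 = 1"
  "pers_betti TYPE('k::field) K2 K2 0 = 1"
  "pers_betti TYPE('k::field) K0 K1' 0 = 1"
  "pers_betti TYPE('k::field) K0 K2' 0 = 1"
  "pers_betti TYPE('k::field) K1' K1' 0 = 2"
  "pers_betti TYPE('k::field) K1' K2' 0 = 1"
  "pers_betti TYPE('k::field) K2' K2' 0 = 1"
  by (simp_all add: pb0 fdZ I1 I1' I2' I0 Ksub I_small[OF Ksub(1) Knoe(1,2)]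
       I_small[OF Ksub(2) Knoe(3,4)] I_small[OF Ksub(4) Knoe(5,6)])

lemma cyc_pos: assumes "K \<subseteq> K2'" "1 \<le> p"
  shows "(cycles K p :: (nat set \<Rightarrow> 'k::field) set) \<subseteq> {0}"
proof
  fix x :: "nat set \<Rightarrow> 'k" assume x: "x \<in> cycles K p"
  show "x \<in> {0}"
  proof (cases "p = 1")
    case True
    then have c: "x \<in> chains K 1" "bd 1 x = 0" using x by (auto simp: cycles_def)
    have s: "\<forall>e. x e \<noteq> 0 \<longrightarrow> e = {0,1} \<or> e = {1,2}" by (rule supp1[OF c(1) assms(1)])
    have "bd1 x = 0" using c(2) by (simp add: bd_def)
    then have "(\<lambda>\<sigma>. x {0,1} * d10 \<sigma> + x {1,2} * d21 \<sigma>) = 0" using bd1_form[OF s] by simp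
    then have "x {0,1} * d10 {0} + x {1,2} * d21 {0} = 0" "x {0,1} * d10 {2} + x {1,2} * d21 {2} = 0"
      by (metis zero_fun_apply)+
    then have "x {0,1} = 0" "x {1,2} = 0" by simp_all
    with s have "x = 0" by (auto simp: fun_eq_iff)
    then show ?thesis by simp
  next
    case False
    with assms(2) have p2: "2 \<le> p" by simp
    have "x \<sigma> = 0" for \<sigma>
    proof (rule ccontr)
      assume "x \<sigma> \<noteq> 0"
      then have "\<sigma> \<in> K" "card \<sigma> = Suc p" using x by (auto simp: cycles_def chains_def)
      then show False using assms(1) p2 by (auto simp: K2'_def)
    qed
    then show ?thesis by (auto simp: fun_eq_iff)
  qed
qed

lemma pb_pos: "K \<subseteq> K2' \<Longrightarrow> 1 \<le> p \<Longrightarrow> pers_betti TYPE('k::field) K L p = 0"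
  unfolding pers_betti_def using cyc_pos[of K p, where 'k='k]
  by (simp add: fdim_sub0 le_infI1)

lemma lev_sub: "level V0 E0 h c \<subseteq> K2'"
  by (auto simp: level_def S0 K2'_def)

lemma pd_pos: assumes p: "1 \<le> p" shows "pdiag TYPE('k::field) V0 E0 h p = (\<lambda>_. 0)"
proof -
  have pb: "pers_betti TYPE('k::field) (level V0 E0 h c) L p = 0" for c L
    by (rule pb_pos[OF lev_sub p])
  show ?thesis unfolding pdiag_def Let_def
    by (simp only: pb) (simp cong: if_cong)
qed

lemma ivs: "{..<3::nat} = {0,1,2}" "{0<..<3::nat} = {1,2}" "{Suc 0<..<3::nat} = {2}"
  "{1<..<3::nat} = {2}" "{2<..<3::nat} = {}"
  "{..<Suc (Suc (Suc 0))} = {0,1,2}" "{0<..<Suc (Suc (Suc 0))} = {1,2}"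
  "{Suc 0<..<Suc (Suc (Suc 0))} = {2}" "{Suc (Suc 0)<..<Suc (Suc (Suc 0))} = {}"
  by auto

lemma pd_f1_pt: "pdiag TYPE('k::field) V0 E0 f1 0 (1, ereal 2) = 1"
  unfolding pdiag_def Let_def crit_f1
  by (simp add: ivs lev_f1 pbv)

lemma pd_f2_pt: "pdiag TYPE('k::field) V0 E0 f2 0 (1, ereal 2) = 0"
  unfolding pdiag_def Let_def crit_f2
  by (simp add: ivs)

lemma len3: "length [0::real,1,2] = 3" by simp
lemma nth3: "[0::real,1,2] ! 0 = 0" "[0::real,1,2] ! 1 = 1" "[0::real,1,2] ! 2 = 2" by simp_all

lemma pd_eq0: "pdiag TYPE('k::field) V0 E0 f1 0 = pdiag TYPE('k) V0 E0 g 0"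
  unfolding pdiag_def Let_def crit_f1 crit_g len3
  by (simp add: ivs lev_f1 lev_g pbv cong: if_cong)



lemma ciso_refl: "complex_iso K K"
  unfolding complex_iso_def by (rule exI[of _ id]) simp

lemma cverts_K: "cverts K2 = {0,1}" "cverts K2' = {0,1,2}"
  by (auto simp: cverts_def K2_def K2'_def)

lemma not_iso: "\<not> complex_iso K2 K2'"
proof
  assume "complex_iso K2 K2'"
  then obtain \<phi> where "bij_betw \<phi> (cverts K2) (cverts K2')" unfolding complex_iso_def by blast
  then have "card (cverts K2) = card (cverts K2')" by (rule bij_betw_same_card)
  then show False unfolding cverts_K by simp
qed

lemma len3': "length [0::real,1,4] = 3" by simp

lemma all3: "(\<forall>i<(3::nat). P i) \<longleftrightarrow> P 0 \<and> P 1 \<and> P 2"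
proof
  assume "P 0 \<and> P 1 \<and> P 2"
  then show "\<forall>i<(3::nat). P i" by (auto simp: numeral_3_eq_3 numeral_2_eq_2 less_Suc_eq)
qed auto

lemma ge_f1f2: "graph_equiv V0 E0 f1 f2"
  unfolding graph_equiv_def crit_f1 crit_f2 len3 len3' all3
  by (simp add: lev_f1 lev_f2 ciso_refl)

lemma nge_f1g: "\<not> graph_equiv V0 E0 f1 g"
proof
  assume "graph_equiv V0 E0 f1 g"
  then have "complex_iso (level V0 E0 f1 ([0,1,2] ! 2)) (level V0 E0 g ([0,1,2] ! 2))"
    unfolding graph_equiv_def crit_f1 crit_g len3 all3 by blast
  then show False using not_iso by (simp add: lev_f1 lev_g)
qed

lemma npe_f1f2: "\<not> pers_equiv TYPE('k::field) V0 E0 f1 f2"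
proof
  assume "pers_equiv TYPE('k::field) V0 E0 f1 f2"
  then have "pdiag TYPE('k) V0 E0 f1 0 (1, ereal 2) = pdiag TYPE('k) V0 E0 f2 0 (1, ereal 2)"
    unfolding pers_equiv_def by simp
  then show False by (simp add: pd_f1_pt pd_f2_pt)
qed

lemma pe_f1g: "pers_equiv TYPE('k::field) V0 E0 f1 g"
  unfolding pers_equiv_def
proof
  fix p :: nat
  show "pdiag TYPE('k) V0 E0 f1 p = pdiag TYPE('k) V0 E0 g p"
  proof (cases "p = 0")
    case True then show ?thesis using pd_eq0 by simp
  next
    case False then have "1 \<le> p" by simp
    then show ?thesis by (simp add: pd_pos)
  qed
qed

theorem mainTheorem10:
  shows "\<exists>(V :: nat set) E. is_tree V E \<and>
     (\<exists>f g. dmf V E f \<and> dmf V E g \<and> graph_equiv V E f g \<and>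
            \<not> pers_equiv TYPE('k::field) V E f g) \<and>
     (\<exists>f g. dmf V E f \<and> dmf V E g \<and> pers_equiv TYPE('k::field) V E f g \<and>
            \<not> graph_equiv V E f g)"
  using tree dmf_f1 dmf_f2 dmf_g ge_f1f2 npe_f1f2 pe_f1g nge_f1g by blast


end
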